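(* Let $\mu\in\mathcal P_2(\mathbb{R}^d)$ have full support on $\mathbb{R}^d$ and satisfy $\int\partial_{1,i}\partial_{2,i}k(x,x)\,\mathrm{d}\mu(x)<\infty$ for all $i$, and let $\pi$ be a probability measure with $m_\pi$ well defined. If the RKHS $\mathcal H$ contains the constant functions, then $\overline{\operatorname{Ran}(S_\mu)}=\ker(S_\mu)^{\perp_{\mathcal H}}=\operatorname{span}\{1\}^{\perp_{\mathcal H}}$; otherwise $\overline{\operatorname{Ran}(S_\mu)}=\{0\}^{\perp_{\mathcal H}}=\mathcal H$. In both cases $m_\mu-m_\pi\in\overline{\operatorname{Ran}(S_\mu)}$.
   Context: $k$ is a symmetric positive definite kernel on $\mathbb{R}^d$, continuously differentiable in both arguments, with RKHS $\mathcal H$ (real-valued functions); $\partial_{1,i},\partial_{2,i}$ are partial derivatives in the first/second argument. $m_\nu=\int k(x,\cdot)\mathrm{d}\nu(x)$ is the kernel mean embedding (assumed well defined for $\mu$ and $\pi$). $D_\mu:\mathcal H\to L_2^d(\mu)$, $f\mapsto\nabla f$, has adjoint $D_\mu^*$, and $S_\mu=D_\mu^*D_\mu$, so $\langle f,S_\mu g\rangle_{\mathcal H}=\int\nabla f^\top\nabla g\,\mathrm{d}\mu$. Orthogonal complements $\perp_{\mathcal H}$ and closures are taken in $\mathcal H$. *)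

theory Defs
  imports "HOL-Analysis.Analysis" "HOL-Probability.Probability"
begin

definition pderiv_dir :: "((real^'d) \<Rightarrow> real) \<Rightarrow> 'd \<Rightarrow> real^'d \<Rightarrow> real" where
  "pderiv_dir F i x = deriv (\<lambda>t. F (x + t *\<^sub>R axis i 1)) 0"

definition grad :: "((real^'d) \<Rightarrow> real) \<Rightarrow> real^'d \<Rightarrow> real^'d" where
  "grad F x = (\<chi> i. pderiv_dir F i x)"

definition kpd1 :: "(real^'d \<Rightarrow> real^'d \<Rightarrow> real) \<Rightarrow> 'd \<Rightarrow> real^'d \<Rightarrow> real^'d \<Rightarrow> real" where
  "kpd1 k i x y = pderiv_dir (\<lambda>z. k z y) i x"

definition kpd2 :: "(real^'d \<Rightarrow> real^'d \<Rightarrow> real) \<Rightarrow> 'd \<Rightarrow> real^'d \<Rightarrow> real^'d \<Rightarrow> real" where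
  "kpd2 k j x y = pderiv_dir (\<lambda>z. k x z) j y"

definition kpd12 :: "(real^'d \<Rightarrow> real^'d \<Rightarrow> real) \<Rightarrow> 'd \<Rightarrow> 'd \<Rightarrow> real^'d \<Rightarrow> real^'d \<Rightarrow> real" where
  "kpd12 k i j x y = pderiv_dir (\<lambda>z. kpd2 k j z y) i x"

definition spd_kernel :: "('a \<Rightarrow> 'a \<Rightarrow> real) \<Rightarrow> bool" where
  "spd_kernel k \<longleftrightarrow> (\<forall>x y. k x y = k y x) \<and>
     (\<forall>(n::nat) (x::nat \<Rightarrow> 'a) (c::nat \<Rightarrow> real). (\<Sum>a<n. \<Sum>b<n. c a * c b * k (x a) (x b)) \<ge> 0)"

definition C11_kernel :: "(real^'d \<Rightarrow> real^'d \<Rightarrow> real) \<Rightarrow> bool" where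
  "C11_kernel k \<longleftrightarrow>
     continuous_on UNIV (\<lambda>p. k (fst p) (snd p)) \<and>
     (\<forall>i x y. ((\<lambda>t. k (x + t *\<^sub>R axis i 1) y) has_real_derivative kpd1 k i x y) (at 0)) \<and>
     (\<forall>j x y. ((\<lambda>t. k x (y + t *\<^sub>R axis j 1)) has_real_derivative kpd2 k j x y) (at 0)) \<and>
     (\<forall>i j x y. ((\<lambda>t. kpd2 k j (x + t *\<^sub>R axis i 1) y) has_real_derivative kpd12 k i j x y) (at 0)) \<and>
     (\<forall>i. continuous_on UNIV (\<lambda>p. kpd1 k i (fst p) (snd p))) \<and>
     (\<forall>j. continuous_on UNIV (\<lambda>p. kpd2 k j (fst p) (snd p))) \<and>
     (\<forall>i j. continuous_on UNIV (\<lambda>p. kpd12 k i j (fst p) (snd p)))"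

text \<open>The Hilbert space 'h (with evaluation map evl turning elements into real-valued
  functions, and canonical features kf x = k(x,.)) is the RKHS of k:
  evl is a linear injection identifying 'h with a space of functions, k(x,.) belongs to it,
  and the reproducing property holds.\<close>
definition is_rkhs :: "(real^'d \<Rightarrow> real^'d \<Rightarrow> real) \<Rightarrow> ('h::real_inner \<Rightarrow> real^'d \<Rightarrow> real)
    \<Rightarrow> (real^'d \<Rightarrow> 'h) \<Rightarrow> bool" where
  "is_rkhs k evl kf \<longleftrightarrow>
     (\<forall>f g x. evl (f + g) x = evl f x + evl g x) \<and> (\<forall>a f x. evl (a *\<^sub>R f) x = a * evl f x) \<and> inj evl \<and> (\<forall>x. evl (kf x) = k x) \<and>
     (\<forall>f x. evl f x = inner f (kf x))"

text \<open>The operator S_mu = D_mu^* D_mu, characterised by <f, S_mu g> = int grad f . grad g dmu.\<close>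
definition S_op :: "(real^'d) measure \<Rightarrow> ('h::real_inner \<Rightarrow> real^'d \<Rightarrow> real) \<Rightarrow> 'h \<Rightarrow> 'h" where
  "S_op \<mu> evl g = (THE s. \<forall>f. inner f s = (\<integral>x. grad (evl f) x \<bullet> grad (evl g) x \<partial>\<mu>))"

definition mean_emb :: "(real^'d) measure \<Rightarrow> (real^'d \<Rightarrow> 'h::{banach,second_countable_topology}) \<Rightarrow> 'h" where
  "mean_emb \<nu> kf = (\<integral>x. kf x \<partial>\<nu>)"

end

theory Submission
  imports Defs
begin

lemma mvt_sym:
  fixes f f' :: "real \<Rightarrow> real"
  assumes d: "\<And>t. (f has_real_derivative f' t) (at t)" and h: "h \<noteq> 0"
  shows "\<exists>z. \<bar>z\<bar> \<le> \<bar>h\<bar> \<and> f h - f 0 = h * f' z"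
proof (cases "h > 0")
  case True
  from MVT2[OF True, of f f'] d obtain z where "0 < z" "z < h" "f h - f 0 = (h - 0) * f' z" by blast
  then show ?thesis by (intro exI[of _ z]) auto
next
  case False
  then have "h < 0" using h by simp
  from MVT2[OF this, of f f'] d obtain z where "h < z" "z < 0" "f 0 - f h = (0 - h) * f' z" by blast
  then show ?thesis by (intro exI[of _ z]) (auto simp: algebra_simps)
qed

lemma deriv_shift_dir:
  fixes F :: "'a::real_normed_vector \<Rightarrow> real"
  assumes "\<And>x. ((\<lambda>t. F (x + t *\<^sub>R v)) has_real_derivative F' x) (at 0)"
  shows "((\<lambda>t. F (x + t *\<^sub>R v)) has_real_derivative F' (x + t0 *\<^sub>R v)) (at t0)"
proof -
  have "((\<lambda>t. F ((x + t0 *\<^sub>R v) + t *\<^sub>R v)) has_real_derivative F' (x + t0 *\<^sub>R v)) (at 0)"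
    by (rule assms)
  moreover have "(\<lambda>t. F ((x + t0 *\<^sub>R v) + t *\<^sub>R v)) = (\<lambda>t. (\<lambda>t. F (x + t *\<^sub>R v)) (t + t0))"
    by (auto simp: algebra_simps)
  ultimately show ?thesis using DERIV_shift[of "\<lambda>t. F (x + t *\<^sub>R v)" _ 0 t0] by simp
qed

lemma subspace_closure_rv:
  fixes V :: "'a::real_normed_vector set"
  assumes "subspace V" shows "subspace (closure V)"
  unfolding subspace_def
proof (intro conjI ballI allI)
  show "0 \<in> closure V" using assms closure_subset subspace_0 by blast
next
  fix x y assume "x \<in> closure V" "y \<in> closure V"
  then obtain f g where f: "\<forall>n. f n \<in> V" "f \<longlonglongrightarrow> x" and g: "\<forall>n. g n \<in> V" "g \<longlonglongrightarrow> y"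
    unfolding closure_sequential by blast
  have "\<forall>n. f n + g n \<in> V" using f g assms subspace_add by blast
  moreover have "(\<lambda>n. f n + g n) \<longlonglongrightarrow> x + y" using f g by (intro tendsto_add) auto
  ultimately show "x + y \<in> closure V" unfolding closure_sequential
    by (intro exI[of _ "\<lambda>n. f n + g n"]) auto
next
  fix c :: real and x assume "x \<in> closure V"
  then obtain f where f: "\<forall>n. f n \<in> V" "f \<longlonglongrightarrow> x"
    unfolding closure_sequential by blast
  have "\<forall>n. c *\<^sub>R f n \<in> V" using f assms subspace_scale by blast
  moreover have "(\<lambda>n. c *\<^sub>R f n) \<longlonglongrightarrow> c *\<^sub>R x" using f by (intro tendsto_scaleR) auto
  ultimately show "c *\<^sub>R x \<in> closure V" unfolding closure_sequential
    by (intro exI[of _ "\<lambda>n. c *\<^sub>R f n"]) auto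
qed

lemma closed_orthogonal_comp_rv:
  fixes W :: "'a::real_inner set"
  shows "closed (orthogonal_comp W)"
proof -
  have "orthogonal_comp W = (\<Inter>y\<in>W. {x. inner y x = 0})"
    by (auto simp: orthogonal_comp_def orthogonal_def)
  moreover have "closed {x. inner y x = 0}" for y :: 'a
    by (intro closed_Collect_eq continuous_intros)
  ultimately show ?thesis by auto
qed

lemma parallelogram_rv:
  fixes a b :: "'a::real_inner"
  shows "(norm (a - b))\<^sup>2 + (norm (a + b))\<^sup>2 = 2 * (norm a)\<^sup>2 + 2 * (norm b)\<^sup>2"
  by (simp add: power2_norm_eq_inner inner_diff_left inner_diff_right inner_add_left inner_add_right inner_commute)

lemma hilbert_proj:
  fixes W :: "'a::{real_inner,complete_space} set"
  assumes W: "subspace W" "closed W"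
  shows "\<exists>p\<in>W. \<forall>w\<in>W. inner (v - p) w = 0"
proof -
  have ne: "W \<noteq> {}" using W subspace_0 by blast
  define d where "d = infdist v W"
  have d0: "0 \<le> d" unfolding d_def by (rule infdist_nonneg)
  have dle: "d \<le> norm (v - w)" if "w \<in> W" for w
    using infdist_le[OF that, of v] by (simp add: d_def dist_norm)
  have dle2: "d\<^sup>2 \<le> (norm (v - w))\<^sup>2" if "w \<in> W" for w
    using dle[OF that] d0 by (simp add: power_mono)
  have "\<exists>w\<in>W. (norm (v - w))\<^sup>2 < d\<^sup>2 + 1 / (Suc n)" for n
  proof -
    have "d < sqrt (d\<^sup>2 + 1 / Suc n)"
    proof -
      have "sqrt (d\<^sup>2) < sqrt (d\<^sup>2 + 1 / Suc n)" by (simp only: real_sqrt_less_iff) simp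
      then show ?thesis using d0 by simp
    qed
    then have "(INF a\<in>W. dist v a) < sqrt (d\<^sup>2 + 1 / Suc n)"
      using infdist_notempty[OF ne] d_def by simp
    then obtain w where w: "w \<in> W" "dist v w < sqrt (d\<^sup>2 + 1 / Suc n)"
    proof -
      have "bdd_below (dist v ` W)" by (meson bdd_belowI2 zero_le_dist)
      then show ?thesis using cINF_less_iff[OF ne, of "dist v"] that \<open>(INF a\<in>W. dist v a) < _\<close> by blast
    qed
    then have "(norm (v - w))\<^sup>2 < (sqrt (d\<^sup>2 + 1 / Suc n))\<^sup>2"
      using w(2) unfolding dist_norm by (intro power_strict_mono) auto
    also have "\<dots> = d\<^sup>2 + 1 / Suc n" by (simp add: add_nonneg_nonneg)
    finally show ?thesis using w by blast
  qed
  then obtain w where w: "\<And>n. w n \<in> W" "\<And>n. (norm (v - w n))\<^sup>2 < d\<^sup>2 + 1 / Suc n"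
    by metis
  have bound: "(norm (w n - w m))\<^sup>2 \<le> 2 / Suc n + 2 / Suc m" for n m
  proof -
    have mid: "(1/2) *\<^sub>R (w n + w m) \<in> W" using W w by (simp add: subspace_add subspace_scale)
    have "v - w n + (v - w m) = 2 *\<^sub>R (v - (1/2) *\<^sub>R (w n + w m))" by (simp add: algebra_simps scaleR_2)
    then have "(norm (v - w n + (v - w m)))\<^sup>2 = 4 * (norm (v - (1/2) *\<^sub>R (w n + w m)))\<^sup>2"
      by (simp add: power_mult_distrib)
    then have "(norm (v - w n + (v - w m)))\<^sup>2 \<ge> 4 * d\<^sup>2" using dle2[OF mid] by simp
    moreover have "(norm (v - w n - (v - w m)))\<^sup>2 + (norm (v - w n + (v - w m)))\<^sup>2
        = 2 * (norm (v - w n))\<^sup>2 + 2 * (norm (v - w m))\<^sup>2" by (rule parallelogram_rv)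
    moreover have "v - w n - (v - w m) = - (w n - w m)" by simp
    ultimately show ?thesis using w(2)[of n] w(2)[of m] by (simp only: norm_minus_cancel)
  qed
  have "Cauchy w"
  proof (rule metric_CauchyI)
    fix e :: real assume e: "0 < e"
    obtain N :: nat where N: "4 / e\<^sup>2 < N" using reals_Archimedean2 by blast
    have e2: "0 < e\<^sup>2" using e by simp
    have "4 < real N * e\<^sup>2" using N e2 by (simp add: field_simps)
    then have "4 < real (Suc N) * e\<^sup>2" using e2 by (simp only: of_nat_Suc distrib_right)
    then have "4 / Suc N < e\<^sup>2" by (simp add: divide_less_eq mult.commute)
    { fix m n assume "m \<ge> N" "n \<ge> N"
      then have "2 / Suc n + 2 / Suc m \<le> 4 / Suc N"
      proof -
        have "2 / real (Suc n) \<le> 2 / real (Suc N)" using \<open>n \<ge> N\<close> by (intro divide_left_mono) auto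
        moreover have "2 / real (Suc m) \<le> 2 / real (Suc N)" using \<open>m \<ge> N\<close> by (intro divide_left_mono) auto
        ultimately show ?thesis by simp
      qed
      then have "(norm (w m - w n))\<^sup>2 < e\<^sup>2" using bound[of m n] \<open>4 / Suc N < e\<^sup>2\<close> by (simp add: add.commute)
      then have "dist (w m) (w n) < e" using e by (simp add: dist_norm power_less_imp_less_base)
    }
    then show "\<exists>M. \<forall>m\<ge>M. \<forall>n\<ge>M. dist (w m) (w n) < e" by blast
  qed
  then obtain p where p: "w \<longlonglongrightarrow> p" using Cauchy_convergent_iff convergent_def by blast
  have pW: "p \<in> W" using closed_sequentially[OF W(2)] w(1) p by blast
  have "(\<lambda>n. (norm (v - w n))\<^sup>2) \<longlonglongrightarrow> (norm (v - p))\<^sup>2"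
    by (intro tendsto_intros p)
  moreover have "(\<lambda>n. d\<^sup>2 + 1 / Suc n) \<longlonglongrightarrow> d\<^sup>2 + 0"
    using LIMSEQ_Suc[OF lim_const_over_n[of 1]] by (intro tendsto_add tendsto_const) simp
  ultimately have pd: "(norm (v - p))\<^sup>2 \<le> d\<^sup>2"
    using w(2) by (intro LIMSEQ_le[of "\<lambda>n. (norm (v - w n))\<^sup>2" _ "\<lambda>n. d\<^sup>2 + 1 / Suc n"]) (auto intro: less_imp_le)
  show ?thesis
  proof (intro bexI[OF _ pW] ballI)
    fix u assume u: "u \<in> W"
    define c where "c = inner (v - p) u"
    define n2 where "n2 = (norm u)\<^sup>2"
    have key: "2 * t * c \<le> t\<^sup>2 * n2" for t
    proof -
      have "p + t *\<^sub>R u \<in> W" using W u pW by (simp add: subspace_add subspace_scale)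
      then have "d\<^sup>2 \<le> (norm (v - (p + t *\<^sub>R u)))\<^sup>2" by (rule dle2)
      also have "\<dots> = (norm (v - p))\<^sup>2 - 2 * t * c + t\<^sup>2 * n2"
        unfolding c_def n2_def power2_norm_eq_inner
        by (simp add: inner_diff_left inner_diff_right inner_add_left inner_add_right inner_commute algebra_simps power2_eq_square)
      finally show ?thesis using pd by linarith
    qed
    have n2: "0 \<le> n2" by (simp add: n2_def)
    have "2 * (c / (n2+1)) * c \<le> (c / (n2+1))\<^sup>2 * n2" by (rule key)
    moreover have "(c / (n2+1))\<^sup>2 * n2 \<le> (c / (n2+1))\<^sup>2 * (n2+1)"
      by (intro mult_left_mono) auto
    moreover have "(c / (n2+1))\<^sup>2 * (n2+1) = c\<^sup>2 / (n2+1)" using n2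
      by (simp add: power2_eq_square)
    moreover have "2 * (c / (n2+1)) * c = 2 * (c\<^sup>2 / (n2+1))" by (simp add: power2_eq_square)
    ultimately have "c\<^sup>2 / (n2+1) \<le> 0" by linarith
    then have "c\<^sup>2 \<le> 0" using n2 by (simp add: divide_le_0_iff)
    then show "inner (v - p) u = 0" unfolding c_def by simp
  qed
qed

locale rk =
  fixes k :: "real^'d \<Rightarrow> real^'d \<Rightarrow> real"
    and evl :: "'h::{real_inner, banach, second_countable_topology} \<Rightarrow> real^'d \<Rightarrow> real"
    and kf :: "real^'d \<Rightarrow> 'h"
  assumes C11: "C11_kernel k" and R: "is_rkhs k evl kf"
begin

lemma evl_inner: "evl f x = inner f (kf x)"
  using R unfolding is_rkhs_def by blast

lemma evl_kf: "evl (kf x) = k x"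
  using R unfolding is_rkhs_def by blast

lemma k_inner: "k x y = inner (kf x) (kf y)"
  using evl_kf[of x] evl_inner[of "kf x" y] by simp

lemma evl_inj: "inj evl"
  using R unfolding is_rkhs_def by blast

lemma d1: "((\<lambda>t. k (x + t *\<^sub>R axis i 1) y) has_real_derivative kpd1 k i x y) (at 0)"
  using C11 unfolding C11_kernel_def by blast
lemma d2: "((\<lambda>t. k x (y + t *\<^sub>R axis j 1)) has_real_derivative kpd2 k j x y) (at 0)"
  using C11 unfolding C11_kernel_def by blast
lemma d12: "((\<lambda>t. kpd2 k j (x + t *\<^sub>R axis i 1) y) has_real_derivative kpd12 k i j x y) (at 0)"
  using C11 unfolding C11_kernel_def by blast
lemma cont12: "continuous_on UNIV (\<lambda>p. kpd12 k i j (fst p) (snd p))"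
  using C11 unfolding C11_kernel_def by blast

lemma double_mvt:
  assumes s: "s \<noteq> 0" and t: "t \<noteq> 0"
  shows "\<exists>\<sigma> \<tau>. \<bar>\<sigma>\<bar> \<le> \<bar>s\<bar> \<and> \<bar>\<tau>\<bar> \<le> \<bar>t\<bar> \<and>
     k (x + s *\<^sub>R axis i 1) (y + t *\<^sub>R axis j 1) - k (x + s *\<^sub>R axis i 1) y - k x (y + t *\<^sub>R axis j 1) + k x y
       = s * t * kpd12 k i j (x + \<sigma> *\<^sub>R axis i 1) (y + \<tau> *\<^sub>R axis j 1)"
proof -
  define h where "h = (\<lambda>r. k (x + s *\<^sub>R axis i 1) (y + r *\<^sub>R axis j 1) - k x (y + r *\<^sub>R axis j 1))"
  have dh: "(h has_real_derivative (kpd2 k j (x + s *\<^sub>R axis i 1) (y + r *\<^sub>R axis j 1) - kpd2 k j x (y + r *\<^sub>R axis j 1))) (at r)" for r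
  proof -
    have a: "((\<lambda>r. k (x + s *\<^sub>R axis i 1) (y + r *\<^sub>R axis j 1)) has_real_derivative kpd2 k j (x + s *\<^sub>R axis i 1) (y + r *\<^sub>R axis j 1)) (at r)"
      by (rule deriv_shift_dir[where F="k (x + s *\<^sub>R axis i 1)" and F'="kpd2 k j (x + s *\<^sub>R axis i 1)"]) (rule d2)
    have b: "((\<lambda>r. k x (y + r *\<^sub>R axis j 1)) has_real_derivative kpd2 k j x (y + r *\<^sub>R axis j 1)) (at r)"
      by (rule deriv_shift_dir[where F="k x" and F'="kpd2 k j x"]) (rule d2)
    show ?thesis unfolding h_def by (rule DERIV_diff[OF a b])
  qed
  obtain \<tau> where \<tau>: "\<bar>\<tau>\<bar> \<le> \<bar>t\<bar>" "h t - h 0 = t * (kpd2 k j (x + s *\<^sub>R axis i 1) (y + \<tau> *\<^sub>R axis j 1) - kpd2 k j x (y + \<tau> *\<^sub>R axis j 1))"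
    using mvt_sym[OF dh t] by blast
  define g where "g = (\<lambda>r. kpd2 k j (x + r *\<^sub>R axis i 1) (y + \<tau> *\<^sub>R axis j 1))"
  have dg: "(g has_real_derivative kpd12 k i j (x + r *\<^sub>R axis i 1) (y + \<tau> *\<^sub>R axis j 1)) (at r)" for r
    unfolding g_def
    by (rule deriv_shift_dir[where F="\<lambda>z. kpd2 k j z _" and F'="\<lambda>z. kpd12 k i j z _"]) (rule d12)
  obtain \<sigma> where \<sigma>: "\<bar>\<sigma>\<bar> \<le> \<bar>s\<bar>" "g s - g 0 = s * kpd12 k i j (x + \<sigma> *\<^sub>R axis i 1) (y + \<tau> *\<^sub>R axis j 1)"
    using mvt_sym[OF dg s] by blast
  have "g s - g 0 = kpd2 k j (x + s *\<^sub>R axis i 1) (y + \<tau> *\<^sub>R axis j 1) - kpd2 k j x (y + \<tau> *\<^sub>R axis j 1)"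
    by (simp add: g_def)
  then have "h t - h 0 = s * t * kpd12 k i j (x + \<sigma> *\<^sub>R axis i 1) (y + \<tau> *\<^sub>R axis j 1)"
    using \<tau>(2) \<sigma>(2) by simp
  moreover have "h t - h 0 = k (x + s *\<^sub>R axis i 1) (y + t *\<^sub>R axis j 1) - k (x + s *\<^sub>R axis i 1) y - k x (y + t *\<^sub>R axis j 1) + k x y"
    by (simp add: h_def)
  ultimately show ?thesis using \<sigma>(1) \<tau>(1) by metis
qed

definition Q where "Q x i s = (1/s) *\<^sub>R (kf (x + s *\<^sub>R axis i 1) - kf x)"

lemma inner_Q:
  assumes "s \<noteq> 0" "t \<noteq> 0"
  shows "\<exists>\<sigma> \<tau>. \<bar>\<sigma>\<bar> \<le> \<bar>s\<bar> \<and> \<bar>\<tau>\<bar> \<le> \<bar>t\<bar> \<and>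
     inner (Q x i s) (Q y j t) = kpd12 k i j (x + \<sigma> *\<^sub>R axis i 1) (y + \<tau> *\<^sub>R axis j 1)"
proof -
  obtain \<sigma> \<tau> where st: "\<bar>\<sigma>\<bar> \<le> \<bar>s\<bar>" "\<bar>\<tau>\<bar> \<le> \<bar>t\<bar>"
     "k (x + s *\<^sub>R axis i 1) (y + t *\<^sub>R axis j 1) - k (x + s *\<^sub>R axis i 1) y - k x (y + t *\<^sub>R axis j 1) + k x y
       = s * t * kpd12 k i j (x + \<sigma> *\<^sub>R axis i 1) (y + \<tau> *\<^sub>R axis j 1)"
    using double_mvt[OF assms] by blast
  have "inner (Q x i s) (Q y j t) = (k (x + s *\<^sub>R axis i 1) (y + t *\<^sub>R axis j 1) - k (x + s *\<^sub>R axis i 1) y - k x (y + t *\<^sub>R axis j 1) + k x y) / (s * t)"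
  proof -
    have e1: "inner ((1/s) *\<^sub>R u) ((1/t) *\<^sub>R w) = inner u w / (s * t)" for u w :: 'h
      by simp
    show ?thesis unfolding Q_def e1 k_inner
      by (simp add: inner_diff_left inner_diff_right algebra_simps)
  qed
  also have "\<dots> = kpd12 k i j (x + \<sigma> *\<^sub>R axis i 1) (y + \<tau> *\<^sub>R axis j 1)"
    using st(3) assms by simp
  finally show ?thesis using st(1,2) by blast
qed

lemma Q_conv: "\<exists>D. (Q x i \<longlongrightarrow> D) (at 0)"
proof -
  define c where "c = kpd12 k i i x x"
  have cf: "cauchy_filter (filtermap (Q x i) (at 0))"
    unfolding cauchy_filter_metric_filtermap
  proof (intro allI impI)
    fix e :: real assume e: "0 < e"
    define \<epsilon> where "\<epsilon> = e\<^sup>2 / 4"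
    have \<epsilon>: "0 < \<epsilon>" using e by (simp add: \<epsilon>_def)
    obtain \<delta> where \<delta>: "\<delta> > 0" "\<And>p. dist p (x, x) < \<delta> \<Longrightarrow> dist (kpd12 k i i (fst p) (snd p)) c < \<epsilon>"
      using cont12[of i i] \<epsilon> unfolding continuous_on_iff c_def by (metis UNIV_I fst_conv snd_conv)
    have close: "\<bar>inner (Q x i s) (Q x i t) - c\<bar> < \<epsilon>" if ne: "s \<noteq> 0" "t \<noteq> 0" and lt: "\<bar>s\<bar> < \<delta>/2" "\<bar>t\<bar> < \<delta>/2" for s t
    proof -
      obtain \<sigma> \<tau> where st: "\<bar>\<sigma>\<bar> \<le> \<bar>s\<bar>" "\<bar>\<tau>\<bar> \<le> \<bar>t\<bar>"
        "inner (Q x i s) (Q x i t) = kpd12 k i i (x + \<sigma> *\<^sub>R axis i 1) (x + \<tau> *\<^sub>R axis i 1)"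
        using inner_Q[OF ne] by blast
      have "dist (x + \<sigma> *\<^sub>R axis i 1, x + \<tau> *\<^sub>R axis i 1) (x, x) = norm (\<sigma> *\<^sub>R axis i (1::real), \<tau> *\<^sub>R axis i (1::real))"
        by (simp add: dist_norm)
      also have "\<dots> \<le> norm (\<sigma> *\<^sub>R axis i (1::real)) + norm (\<tau> *\<^sub>R axis i (1::real))" by (rule norm_Pair_le)
      also have "\<dots> = \<bar>\<sigma>\<bar> + \<bar>\<tau>\<bar>" by simp
      also have "\<dots> < \<delta>" using st lt by linarith
      finally show ?thesis using \<delta>(2) st(3) by (fastforce simp: dist_real_def)
    qed
    show "\<exists>P. eventually P (at 0) \<and> (\<forall>s t. P s \<and> P t \<longrightarrow> dist (Q x i s) (Q x i t) < e)"
    proof (intro exI[of _ "\<lambda>s. s \<noteq> 0 \<and> \<bar>s\<bar> < \<delta>/2"] conjI allI impI)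
      show "eventually (\<lambda>s. s \<noteq> 0 \<and> \<bar>s\<bar> < \<delta>/2) (at (0::real))"
        unfolding eventually_at using \<delta>(1) by (intro exI[of _ "\<delta>/2"]) auto
    next
      fix s t assume "(s \<noteq> 0 \<and> \<bar>s\<bar> < \<delta>/2) \<and> (t \<noteq> 0 \<and> \<bar>t\<bar> < \<delta>/2)"
      then have a: "\<bar>inner (Q x i s) (Q x i s) - c\<bar> < \<epsilon>" "\<bar>inner (Q x i s) (Q x i t) - c\<bar> < \<epsilon>"
         "\<bar>inner (Q x i t) (Q x i t) - c\<bar> < \<epsilon>" using close by auto
      have "(dist (Q x i s) (Q x i t))\<^sup>2 = inner (Q x i s) (Q x i s) - 2 * inner (Q x i s) (Q x i t) + inner (Q x i t) (Q x i t)"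
        unfolding dist_norm power2_norm_eq_inner by (simp add: inner_diff_left inner_diff_right inner_commute)
      also have "\<dots> < 4 * \<epsilon>" using a by linarith
      also have "\<dots> = e\<^sup>2" by (simp add: \<epsilon>_def)
      finally show "dist (Q x i s) (Q x i t) < e" using e by (simp add: power_less_imp_less_base)
    qed
  qed
  have "filtermap (Q x i) (at 0) \<noteq> bot" by (simp add: filtermap_bot_iff)
  then obtain D where "filtermap (Q x i) (at 0) \<le> nhds D"
    using cauchy_filter_complete_converges[OF cf complete_UNIV_cuspace] by auto
  then show ?thesis unfolding filterlim_def by blast
qed

definition D where "D i x = (SOME D. (Q x i \<longlongrightarrow> D) (at 0))"

lemma D_lim: "(Q x i \<longlongrightarrow> D i x) (at 0)"
  unfolding D_def using Q_conv by (rule someI_ex)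

lemma deriv_evl0: "((\<lambda>t. evl f (x + t *\<^sub>R axis i 1)) has_real_derivative inner f (D i x)) (at 0)"
proof -
  have eq: "(\<lambda>y. (evl f (x + y *\<^sub>R axis i 1) - evl f (x + 0 *\<^sub>R axis i 1)) / (y - 0)) = (\<lambda>y. inner f (Q x i y))"
    by (auto simp: Q_def evl_inner inner_diff_right divide_inverse mult.commute)
  have "((\<lambda>y. inner f (Q x i y)) \<longlongrightarrow> inner f (D i x)) (at 0)"
    by (intro tendsto_inner tendsto_const D_lim)
  then show ?thesis unfolding has_field_derivative_iff eq .
qed

lemma deriv_evl: "((\<lambda>t. evl f (x + t *\<^sub>R axis i 1)) has_real_derivative inner f (D i (x + t0 *\<^sub>R axis i 1))) (at t0)"
  by (rule deriv_shift_dir[where F="evl f"]) (rule deriv_evl0)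

lemma pderiv_evl: "pderiv_dir (evl f) i x = inner f (D i x)"
  unfolding pderiv_dir_def by (rule DERIV_imp_deriv) (rule deriv_evl0)

lemma grad_evl: "grad (evl f) x = (\<chi> i. inner f (D i x))"
  unfolding grad_def pderiv_evl ..

lemma grad_inner: "grad (evl f) x \<bullet> grad (evl g) x = (\<Sum>i\<in>UNIV. inner f (D i x) * inner g (D i x))"
  unfolding grad_evl inner_vec_def by simp

lemma kf_D: "inner (kf z) (D j y) = kpd2 k j z y"
proof -
  have "((\<lambda>t. evl (kf z) (y + t *\<^sub>R axis j 1)) has_real_derivative inner (kf z) (D j y)) (at 0)"
    by (rule deriv_evl0)
  then have "((\<lambda>t. k z (y + t *\<^sub>R axis j 1)) has_real_derivative inner (kf z) (D j y)) (at 0)"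
    by (simp add: evl_kf)
  then show ?thesis using d2 DERIV_unique by blast
qed

lemma DD: "inner (D i x) (D j y) = kpd12 k i j x y"
proof -
  have "((\<lambda>t. evl (D j y) (x + t *\<^sub>R axis i 1)) has_real_derivative inner (D j y) (D i x)) (at 0)"
    by (rule deriv_evl0)
  moreover have "(\<lambda>t. evl (D j y) (x + t *\<^sub>R axis i 1)) = (\<lambda>t. kpd2 k j (x + t *\<^sub>R axis i 1) y)"
    by (rule ext) (metis evl_inner inner_commute kf_D)
  ultimately have "((\<lambda>t. kpd2 k j (x + t *\<^sub>R axis i 1) y) has_real_derivative inner (D j y) (D i x)) (at 0)"
    by simp
  then show ?thesis using d12 DERIV_unique inner_commute by metis
qed

lemma normD: "(norm (D i x))\<^sup>2 = kpd12 k i i x x"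
  by (simp add: power2_norm_eq_inner DD)

lemma contD: "continuous_on UNIV (D i)"
proof -
  have "continuous_on UNIV (\<lambda>y::real^'d. (y, y))" by (intro continuous_intros)
  then have cd: "continuous_on UNIV (\<lambda>y. kpd12 k i i y y)"
    using continuous_on_compose2[OF cont12[of i i], of UNIV "\<lambda>y. (y, y)"] by auto
  have "isCont (D i) x" for x
  proof -
    have "continuous_on UNIV (\<lambda>y::real^'d. (y, x))" by (intro continuous_intros)
    then have cd': "continuous_on UNIV (\<lambda>y. kpd12 k i i y x)"
      using continuous_on_compose2[OF cont12[of i i], of UNIV "\<lambda>y. (y, x)"] by auto
    have "continuous_on UNIV (\<lambda>y::real^'d. (x, y))" by (intro continuous_intros)
    then have cd'': "continuous_on UNIV (\<lambda>y. kpd12 k i i x y)"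
      using continuous_on_compose2[OF cont12[of i i], of UNIV "\<lambda>y. (x, y)"] by auto
    define G where "G y = kpd12 k i i y y - kpd12 k i i y x - kpd12 k i i x y + kpd12 k i i x x" for y
    have G: "(norm (D i y - D i x))\<^sup>2 = G y" for y
      unfolding G_def power2_norm_eq_inner
      by (simp add: inner_diff_left inner_diff_right DD)
    have "isCont G x" unfolding G_def
      using cd cd' cd'' by (intro continuous_intros) (auto simp: continuous_on_eq_continuous_at)
    then have "(G \<longlongrightarrow> G x) (at x)" by (simp add: isCont_def)
    moreover have "G x = 0" by (simp add: G_def)
    ultimately have "((\<lambda>y. sqrt (G y)) \<longlongrightarrow> 0) (at x)"
      using tendsto_real_sqrt by fastforce
    moreover have "sqrt (G y) = norm (D i y - D i x)" for y
      using G[of y] by (metis norm_ge_zero real_sqrt_unique)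
    ultimately have "((\<lambda>y. norm (D i y - D i x)) \<longlongrightarrow> 0) (at x)" by simp
    then show ?thesis unfolding isCont_def
      by (simp add: tendsto_norm_zero_iff LIM_zero_iff)
  qed
  then show ?thesis by (simp add: continuous_on_eq_continuous_at)
qed

end

locale rkm = rk k evl kf
  for k :: "real^'d \<Rightarrow> real^'d \<Rightarrow> real"
    and evl :: "'h::{real_inner, banach, second_countable_topology} \<Rightarrow> real^'d \<Rightarrow> real"
    and kf :: "real^'d \<Rightarrow> 'h" +
  fixes \<mu> :: "(real^'d) measure"
  assumes P: "prob_space \<mu>" and SB: "sets \<mu> = sets borel"
    and supp: "\<forall>U. open U \<and> U \<noteq> {} \<longrightarrow> emeasure \<mu> U > 0"
    and mint: "\<forall>i. (\<integral>\<^sup>+x. ennreal (kpd12 k i i x x) \<partial>\<mu>) < \<infinity>"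
begin

lemma space_mu: "space \<mu> = UNIV"
  using sets_eq_imp_space_eq[OF SB] by simp

lemma cont_meas: "continuous_on UNIV f \<Longrightarrow> f \<in> borel_measurable \<mu>"
  using measurable_cong_sets[OF SB refl] borel_measurable_continuous_onI by blast

lemma contDD: "continuous_on UNIV (\<lambda>x. kpd12 k i i x x)"
proof -
  have "continuous_on UNIV (\<lambda>x. (norm (D i x))\<^sup>2)" using contD[of i] by (intro continuous_intros)
  then show ?thesis by (simp add: normD)
qed

lemma K_int: "integrable \<mu> (\<lambda>x. kpd12 k i i x x)"
proof -
  have nn: "0 \<le> kpd12 k i i x x" for x using normD[of i x] by (metis zero_le_power2)
  show ?thesis unfolding integrable_iff_bounded
    using cont_meas[OF contDD] mint nn by simp
qed

definition Fi where "Fi g i x = inner g (D i x) *\<^sub>R D i x"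
definition Fg where "Fg g x = (\<Sum>i\<in>UNIV. Fi g i x)"

lemma Fi_int: "integrable \<mu> (Fi g i)"
proof (rule Bochner_Integration.integrable_bound[where f="\<lambda>x. norm g * kpd12 k i i x x"])
  show "integrable \<mu> (\<lambda>x. norm g * kpd12 k i i x x)" using K_int by simp
  show "Fi g i \<in> borel_measurable \<mu>" unfolding Fi_def
    by (intro cont_meas continuous_intros contD)
  show "AE x in \<mu>. norm (Fi g i x) \<le> norm (norm g * kpd12 k i i x x)"
  proof (intro AE_I2)
    fix x
    have "norm (Fi g i x) = \<bar>inner g (D i x)\<bar> * norm (D i x)" by (simp add: Fi_def)
    also have "\<dots> \<le> (norm g * norm (D i x)) * norm (D i x)"
      by (intro mult_right_mono Cauchy_Schwarz_ineq2) auto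
    also have "\<dots> = norm g * kpd12 k i i x x" by (simp add: normD[symmetric] power2_eq_square)
    also have "\<dots> \<le> norm (norm g * kpd12 k i i x x)" by simp
    finally show "norm (Fi g i x) \<le> norm (norm g * kpd12 k i i x x)" .
  qed
qed

lemma Fg_int: "integrable \<mu> (Fg g)"
  unfolding Fg_def by (intro Bochner_Integration.integrable_sum Fi_int)

lemma Fg_cont: "continuous_on UNIV (Fg g)"
  unfolding Fg_def Fi_def by (intro continuous_intros contD)

lemma inner_Fg: "inner f (Fg g x) = (\<Sum>i\<in>UNIV. inner f (D i x) * inner g (D i x))"
  unfolding Fg_def Fi_def by (simp add: inner_sum_right mult.commute)

definition sS where "sS g = (\<integral>x. Fg g x \<partial>\<mu>)"

lemma inner_sS: "inner f (sS g) = (\<integral>x. (\<Sum>i\<in>UNIV. inner f (D i x) * inner g (D i x)) \<partial>\<mu>)"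
proof -
  have "inner f (sS g) = (\<integral>x. inner f (Fg g x) \<partial>\<mu>)"
    unfolding sS_def by (rule integral_bounded_linear[OF bounded_linear_inner_right Fg_int, symmetric])
  then show ?thesis by (simp add: inner_Fg)
qed

lemma S_eq: "S_op \<mu> evl g = sS g"
  unfolding S_op_def
proof (rule the_equality)
  show "\<forall>f. inner f (sS g) = (\<integral>x. grad (evl f) x \<bullet> grad (evl g) x \<partial>\<mu>)"
    by (simp add: inner_sS grad_inner)
next
  fix s assume s: "\<forall>f. inner f s = (\<integral>x. grad (evl f) x \<bullet> grad (evl g) x \<partial>\<mu>)"
  have "inner (s - sS g) s = inner (s - sS g) (sS g)"
    using s by (simp add: inner_sS grad_inner)
  then have "inner (s - sS g) (s - sS g) = 0" by (simp add: inner_diff_right)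
  then show "s = sS g" by simp
qed

lemma SS: "inner f (S_op \<mu> evl g) = (\<integral>x. (\<Sum>i\<in>UNIV. inner f (D i x) * inner g (D i x)) \<partial>\<mu>)"
  by (simp add: S_eq inner_sS)

lemma S_sym: "inner f (S_op \<mu> evl g) = inner g (S_op \<mu> evl f)"
  unfolding SS by (simp add: mult.commute)

lemma S_linear: "linear (S_op \<mu> evl)"
proof (rule linearI)
  fix g h
  have "Fg (g + h) = (\<lambda>x. Fg g x + Fg h x)"
    by (auto simp: Fg_def Fi_def inner_add_left scaleR_add_left sum.distrib)
  then show "S_op \<mu> evl (g + h) = S_op \<mu> evl g + S_op \<mu> evl h"
    by (simp add: S_eq sS_def Fg_int)
next
  fix c :: real and g
  have "Fg (c *\<^sub>R g) = (\<lambda>x. c *\<^sub>R Fg g x)"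
    by (simp add: Fg_def Fi_def scaleR_sum_right fun_eq_iff)
  then show "S_op \<mu> evl (c *\<^sub>R g) = c *\<^sub>R S_op \<mu> evl g"
    by (simp add: S_eq sS_def)
qed

lemma full_supp:
  assumes c: "continuous_on UNIV h" and ae: "AE x in \<mu>. h x = (0::real)"
  shows "h x = 0"
proof (rule ccontr)
  assume hx: "h x \<noteq> 0"
  define U where "U = {x. h x \<noteq> 0}"
  have oU: "open U" unfolding U_def using c by (intro open_Collect_neq continuous_intros) auto
  have "U \<in> sets \<mu>" using oU SB by simp
  moreover have "{x\<in>space \<mu>. \<not> h x = 0} = U" by (simp add: U_def space_mu)
  ultimately have "emeasure \<mu> U = 0" using AE_iff_measurable[of U \<mu> "\<lambda>x. h x = 0"] ae by simp
  moreover have "U \<noteq> {}" using hx U_def by blast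
  then have "emeasure \<mu> U > 0" using supp oU by blast
  ultimately show False by simp
qed

lemma ker_iff: "S_op \<mu> evl g = 0 \<longleftrightarrow> (\<forall>i x. inner g (D i x) = 0)"
proof
  assume 0: "S_op \<mu> evl g = 0"
  define h where "h = (\<lambda>x. \<Sum>i\<in>UNIV. inner g (D i x) * inner g (D i x))"
  have hF: "h x = inner g (Fg g x)" for x by (simp add: h_def inner_Fg)
  have hint: "integrable \<mu> h" unfolding hF[abs_def]
    by (rule integrable_bounded_linear[OF bounded_linear_inner_right Fg_int])
  have hc: "continuous_on UNIV h" unfolding hF[abs_def] by (intro continuous_intros Fg_cont)
  have hnn: "0 \<le> h x" for x unfolding h_def by (intro sum_nonneg) simp
  have "integral\<^sup>L \<mu> h = 0" using 0 SS[of g g] by (simp add: h_def)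
  then have "AE x in \<mu>. h x = 0" using integral_nonneg_eq_0_iff_AE[OF hint] hnn by simp
  then have h0: "h x = 0" for x using full_supp hc by blast
  show "\<forall>i x. inner g (D i x) = 0"
  proof (intro allI)
    fix i x
    have "\<forall>i\<in>UNIV. inner g (D i x) * inner g (D i x) = 0"
      using h0[of x] unfolding h_def by (subst (asm) sum_nonneg_eq_0_iff) auto
    then show "inner g (D i x) = 0" by simp
  qed
next
  assume a: "\<forall>i x. inner g (D i x) = 0"
  have "inner (S_op \<mu> evl g) (S_op \<mu> evl g) = 0" using SS[of "S_op \<mu> evl g" g] a by simp
  then show "S_op \<mu> evl g = 0" by simp
qed

end

context rk begin

lemma evl_scale: "evl (a *\<^sub>R c) = (\<lambda>x. a * evl c x)"
  by (simp add: evl_inner fun_eq_iff)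

lemma evl_zero: "evl 0 = (\<lambda>_. 0)"
  by (simp add: evl_inner fun_eq_iff)

lemma const_iff: "(\<forall>i x. inner g (D i x) = 0) \<longleftrightarrow> (\<exists>a. evl g = (\<lambda>_. a))"
proof
  assume a: "\<forall>i x. inner g (D i x) = 0"
  have mv: "evl g (z + t *\<^sub>R axis i 1) = evl g z" for z i t
  proof -
    have "\<forall>t0. ((\<lambda>t. evl g (z + t *\<^sub>R axis i 1)) has_real_derivative 0) (at t0)"
      using deriv_evl[of g z i] a by simp
    from DERIV_isconst_all[OF this, of t 0] show ?thesis by simp
  qed
  have ind: "finite S \<Longrightarrow> evl g (\<Sum>i\<in>S. (y$i) *\<^sub>R axis i 1) = evl g 0" for S y
  proof (induction S rule: finite_induct)
    case empty then show ?case by simp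
  next
    case (insert i S)
    have eq: "(\<Sum>j\<in>insert i S. (y$j) *\<^sub>R axis j 1) = (\<Sum>j\<in>S. (y$j) *\<^sub>R axis j 1) + (y$i) *\<^sub>R axis i 1"
      unfolding sum.insert[OF insert.hyps] by (rule add.commute)
    have "evl g (\<Sum>j\<in>insert i S. (y$j) *\<^sub>R axis j 1) = evl g ((\<Sum>j\<in>S. (y$j) *\<^sub>R axis j 1) + (y$i) *\<^sub>R axis i 1)"
      unfolding eq ..
    also have "\<dots> = evl g (\<Sum>j\<in>S. (y$j) *\<^sub>R axis j 1)" by (rule mv)
    finally show ?case using insert by simp
  qed
  have "evl g y = evl g 0" for y
    using ind[of UNIV y] basis_expansion[of y] by (simp add: scalar_mult_eq_scaleR)
  then show "\<exists>a. evl g = (\<lambda>_. a)" by (intro exI[of _ "evl g 0"]) auto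
next
  assume "\<exists>a. evl g = (\<lambda>_. a)"
  then obtain a where a: "evl g = (\<lambda>_. a)" by blast
  show "\<forall>i x. inner g (D i x) = 0"
  proof (intro allI)
    fix i x
    have "((\<lambda>t. a) has_real_derivative inner g (D i x)) (at 0)"
      using deriv_evl0[of g x i] a by simp
    from DERIV_unique[OF this DERIV_const] show "inner g (D i x) = 0" .
  qed
qed

lemma inner_mean:
  assumes "prob_space \<nu>" "integrable \<nu> kf" "evl h = (\<lambda>_. a)"
  shows "inner h (mean_emb \<nu> kf) = a"
proof -
  have "inner h (mean_emb \<nu> kf) = (\<integral>x. inner h (kf x) \<partial>\<nu>)"
    unfolding mean_emb_def by (rule integral_bounded_linear[OF bounded_linear_inner_right assms(2), symmetric])
  also have "\<dots> = (\<integral>x. a \<partial>\<nu>)" using assms(3) by (simp add: evl_inner[symmetric])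
  also have "\<dots> = a" using assms(1) by (simp add: prob_space.prob_space)
  finally show ?thesis .
qed

end

theorem lemma1:
  fixes k :: "real^'d \<Rightarrow> real^'d \<Rightarrow> real"
    and evl :: "'h::{real_inner, banach, second_countable_topology} \<Rightarrow> real^'d \<Rightarrow> real"
    and kf :: "real^'d \<Rightarrow> 'h"
    and \<mu> \<pi> :: "(real^'d) measure"
  assumes kern: "spd_kernel k" "C11_kernel k"
    and rkhs: "is_rkhs k evl kf"
    and mu_P2: "prob_space \<mu>" "sets \<mu> = sets borel" "integrable \<mu> (\<lambda>x. (norm x)\<^sup>2)"
    and mu_supp: "\<forall>U. open U \<and> U \<noteq> {} \<longrightarrow> emeasure \<mu> U > 0"
    and mu_int: "\<forall>i. (\<integral>\<^sup>+x. ennreal (kpd12 k i i x x) \<partial>\<mu>) < \<infinity>"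
    and mu_emb: "integrable \<mu> kf"
    and pi_prob: "prob_space \<pi>" "sets \<pi> = sets borel"
    and pi_emb: "integrable \<pi> kf"
  shows "((\<exists>c. evl c = (\<lambda>_. 1)) \<longrightarrow>
            closure (range (S_op \<mu> evl)) = orthogonal_comp {g. S_op \<mu> evl g = 0} \<and>
            (\<forall>c. evl c = (\<lambda>_. 1) \<longrightarrow> closure (range (S_op \<mu> evl)) = orthogonal_comp (span {c})))
       \<and> ((\<nexists>c. evl c = (\<lambda>_. 1)) \<longrightarrow>
            closure (range (S_op \<mu> evl)) = orthogonal_comp {0} \<and>
            closure (range (S_op \<mu> evl)) = UNIV)
       \<and> mean_emb \<mu> kf - mean_emb \<pi> kf \<in> closure (range (S_op \<mu> evl))"
proof -
  interpret rkm k evl kf \<mu>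
    by (intro rkm.intro rk.intro rkm_axioms.intro) (rule kern(2) rkhs mu_P2(1) mu_P2(2) mu_supp mu_int)+
  define S where "S = S_op \<mu> evl"
  define K where "K = {g. S g = 0}"
  have lin: "linear S" unfolding S_def by (rule S_linear)
  have Ssym: "inner f (S g) = inner g (S f)" for f g unfolding S_def by (rule S_sym)
  have ker: "K = {g. \<exists>a. evl g = (\<lambda>_. a)}"
  proof -
    have "S g = 0 \<longleftrightarrow> (\<exists>a. evl g = (\<lambda>_. a))" for g unfolding S_def using ker_iff[of g] const_iff[of g] by simp
    then show ?thesis unfolding K_def by blast
  qed
  have subR: "subspace (range S)"
    unfolding subspace_def
  proof (intro conjI ballI allI)
    show "0 \<in> range S" using linear_0[OF lin] by (metis rangeI)
  next
    fix x y assume "x \<in> range S" "y \<in> range S"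
    then obtain a b where "x = S a" "y = S b" by auto
    then show "x + y \<in> range S" using linear_add[OF lin, of a b] by (metis rangeI)
  next
    fix c :: real and x assume "x \<in> range S"
    then obtain a where "x = S a" by auto
    then show "c *\<^sub>R x \<in> range S" using linear_scale[OF lin, of c a] by (metis rangeI)
  qed
  have R: "closure (range S) = orthogonal_comp K"
  proof
    { fix g h assume "h \<in> K" then have "inner h (S g) = 0" using Ssym[of h g] by (simp add: K_def) }
    then have "range S \<subseteq> orthogonal_comp K"
      by (auto simp: orthogonal_comp_def orthogonal_def)
    then show "closure (range S) \<subseteq> orthogonal_comp K"
      by (rule closure_minimal) (rule closed_orthogonal_comp_rv)
  next
    show "orthogonal_comp K \<subseteq> closure (range S)"
    proof
      fix v assume v: "v \<in> orthogonal_comp K"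
      obtain p where p: "p \<in> closure (range S)" "\<forall>w\<in>closure (range S). inner (v - p) w = 0"
        using hilbert_proj[OF subspace_closure_rv[OF subR] closed_closure] by blast
      have o1: "inner (v - p) (S g) = 0" for g using p(2) closure_subset by blast
      have o2: "inner g (S (v - p)) = 0" for g using Ssym[of g "v - p"] o1[of g] by simp
      have "S (v - p) = 0" using o2[of "S (v - p)"] by simp
      then have "v - p \<in> K" by (simp add: K_def)
      then have "inner (v - p) v = 0" using v by (auto simp: orthogonal_comp_def orthogonal_def)
      moreover have "inner (v - p) p = 0" using p by blast
      ultimately have "inner (v - p) (v - p) = 0" by (simp add: inner_diff_right)
      then show "v \<in> closure (range S)" using p(1) by simp
    qed
  qed
  have c1: "K = span {c}" if c: "evl c = (\<lambda>_. 1)" for c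
  proof
    show "K \<subseteq> span {c}"
    proof
      fix g assume "g \<in> K"
      then obtain a where a: "evl g = (\<lambda>_. a)" using ker by blast
      have "evl g = evl (a *\<^sub>R c)" using a c by (simp add: evl_scale)
      then have "g = a *\<^sub>R c" using evl_inj by (simp add: inj_eq)
      then show "g \<in> span {c}" by (metis span_base span_scale singletonI)
    qed
  next
    have "subspace K" unfolding subspace_def K_def
    proof (intro conjI ballI allI)
      show "0 \<in> {g. S g = 0}" using linear_0[OF lin] by simp
    next
      fix x y assume "x \<in> {g. S g = 0}" "y \<in> {g. S g = 0}"
      then show "x + y \<in> {g. S g = 0}" using linear_add[OF lin, of x y] by simp
    next
      fix c :: real and x assume "x \<in> {g. S g = 0}"
      then show "c *\<^sub>R x \<in> {g. S g = 0}" using linear_scale[OF lin, of c x] by simp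
    qed
    moreover have "c \<in> K" unfolding ker using c by blast
    ultimately show "span {c} \<subseteq> K" by (simp add: span_minimal)
  qed
  have c2: "K = {0}" if nc: "\<nexists>c. evl c = (\<lambda>_. 1)"
  proof
    show "K \<subseteq> {0}"
    proof
      fix g assume "g \<in> K"
      then obtain a where a: "evl g = (\<lambda>_. a)" using ker by blast
      have "a = 0"
      proof (rule ccontr)
        assume "a \<noteq> 0"
        then have "evl ((1/a) *\<^sub>R g) = (\<lambda>_. 1)" using a by (simp add: evl_scale)
        then show False using nc by blast
      qed
      then have "evl g = evl 0" using a by (simp add: evl_zero)
      then show "g \<in> {0}" using evl_inj by (simp add: inj_eq)
    qed
  next
    show "{0} \<subseteq> K" unfolding ker using evl_zero by blast
  qed
  have m: "mean_emb \<mu> kf - mean_emb \<pi> kf \<in> orthogonal_comp K"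
  proof -
    { fix h assume "h \<in> K"
      then obtain a where a: "evl h = (\<lambda>_. a)" using ker by blast
      have "inner h (mean_emb \<mu> kf - mean_emb \<pi> kf) = 0"
        using inner_mean[OF mu_P2(1) mu_emb a] inner_mean[OF pi_prob(1) pi_emb a]
        by (simp add: inner_diff_right) }
    then show ?thesis by (auto simp: orthogonal_comp_def orthogonal_def)
  qed
  show ?thesis
    unfolding S_def[symmetric] K_def[symmetric]
  proof (intro conjI impI allI)
    show "closure (range S) = orthogonal_comp K" by (rule R)
    show "closure (range S) = orthogonal_comp (span {c})" if "evl c = (\<lambda>_. 1)" for c
      using R c1[OF that] by simp
    show "closure (range S) = orthogonal_comp {0}" if "\<nexists>c. evl c = (\<lambda>_. 1)"
      using R c2[OF that] by simp
    show "closure (range S) = UNIV" if "\<nexists>c. evl c = (\<lambda>_. 1)"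
      using R c2[OF that] by simp
    show "mean_emb \<mu> kf - mean_emb \<pi> kf \<in> closure (range S)" using R m by simp
  qed
qed

end
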